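(* If $m>n\ge 1$ are natural numbers, then $\mathrm{Log}_{>1}(\mathbb{R}^n)\not\subseteq \mathrm{Log}_{>1}(\mathbb{R}^m)$. Consequently, the logics $\mathrm{Log}_{>1}(\mathbb{R}^n)$, $n\ge 1$, are pairwise distinct.
   Context: Modal formulas are built from a countable set of propositional variables using $\bot$, $\to$ and one unary modality $\lozenge$. A frame is a pair $(X,R)$; a valuation assigns subsets of $X$ to variables; $x\models\lozenge\varphi$ iff there is $y$ with $xRy$ and $y\models\varphi$. A formula is valid in a frame if true at every point under every valuation. For a metric space $(X,d)$, $\mathrm{Log}_{>1}(X)$ is the set of modal formulas valid in the frame $(X,R_{>1})$, where $xR_{>1}y$ iff $d(x,y)>1$. $\mathbb{R}^n$ carries the Euclidean metric. *)

theory Defs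
  imports "HOL-Analysis.Analysis"
begin

datatype fm = Var nat | Bot | Imp fm fm | Dia fm

fun sat :: "('a \<Rightarrow> 'a \<Rightarrow> bool) \<Rightarrow> (nat \<Rightarrow> 'a set) \<Rightarrow> 'a \<Rightarrow> fm \<Rightarrow> bool" where
  "sat R V x (Var p) = (x \<in> V p)"
| "sat R V x Bot = False"
| "sat R V x (Imp a b) = (sat R V x a \<longrightarrow> sat R V x b)"
| "sat R V x (Dia a) = (\<exists>y. R x y \<and> sat R V y a)"

definition valid_frame :: "('a \<Rightarrow> 'a \<Rightarrow> bool) \<Rightarrow> fm \<Rightarrow> bool" where
  "valid_frame R \<phi> \<longleftrightarrow> (\<forall>V x. sat R V x \<phi>)"

definition Log_gt1 :: "'a::metric_space itself \<Rightarrow> fm set" where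
  "Log_gt1 _ = {\<phi>. valid_frame (\<lambda>x y::'a. dist x y > 1) \<phi>}"

end

theory Submission
  imports Defs
begin

definition neg :: "fm \<Rightarrow> fm" where "neg a = Imp a Bot"
definition conj :: "fm \<Rightarrow> fm \<Rightarrow> fm" where "conj a b = neg (Imp a (neg b))"
definition box :: "fm \<Rightarrow> fm" where "box a = neg (Dia (neg a))"

fun conjs :: "fm list \<Rightarrow> fm" where
  "conjs [] = neg Bot"
| "conjs (a # as) = conj a (conjs as)"

lemma sat_conjs: "sat R V x (conjs l) \<longleftrightarrow> (\<forall>a\<in>set l. sat R V x a)"
  by (induction l) (auto simp: conj_def neg_def)

definition allbut :: "nat \<Rightarrow> nat \<Rightarrow> fm" where
  "allbut k j = conjs (map (\<lambda>i. box (neg (Var i))) (filter (\<lambda>i. i \<noteq> j) [0..<k]))"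

definition H :: "nat \<Rightarrow> fm" where
  "H k = Imp (conjs (map (\<lambda>j. Dia (Dia (allbut k j))) [0..<k])) (Dia (Dia (allbut k k)))"

lemma sat_allbut: "sat R V z (allbut k j) \<longleftrightarrow> (\<forall>i<k. i \<noteq> j \<longrightarrow> (\<forall>w. R z w \<longrightarrow> w \<notin> V i))"
  by (auto simp: allbut_def sat_conjs box_def neg_def)

lemma sat_H: "sat R V x (H k) \<longleftrightarrow>
  ((\<forall>j<k. \<exists>y. R x y \<and> (\<exists>z. R y z \<and> (\<forall>i<k. i \<noteq> j \<longrightarrow> (\<forall>w. R z w \<longrightarrow> w \<notin> V i))))
   \<longrightarrow> (\<exists>y. R x y \<and> (\<exists>z. R y z \<and> (\<forall>i<k. (\<forall>w. R z w \<longrightarrow> w \<notin> V i)))))"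
  by (auto simp: H_def sat_conjs sat_allbut)

lemma far_point:
  fixes x z :: "'a::euclidean_space"
  shows "\<exists>y. dist x y > 1 \<and> dist y z > 1"
proof -
  obtain b :: 'a where b: "b \<in> Basis" using nonempty_Basis by blast
  define y where "y = x + (dist x z + 2) *\<^sub>R b"
  have nb: "norm b = 1" using b by simp
  have "dist x y = dist x z + 2"
    unfolding y_def dist_norm using nb by (simp add: abs_of_nonneg)
  moreover have "dist x y \<le> dist x z + dist y z" by (metis dist_commute dist_triangle)
  ultimately have "dist x y > 1" "dist y z > 1" using zero_le_dist[of x z] by linarith+
  then show ?thesis by blast
qed

lemma two_step:
  fixes x :: "'a::euclidean_space"
  shows "(\<exists>y. dist x y > 1 \<and> (\<exists>z. dist y z > 1 \<and> Q z)) \<longleftrightarrow> (\<exists>z. Q z)"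
  using far_point by blast

lemma helly_valid:
  "valid_frame (\<lambda>x y::'a::euclidean_space. dist x y > 1) (H (DIM('a) + 2))"
  unfolding valid_frame_def
proof (intro allI)
  fix V and x :: 'a
  let ?k = "DIM('a) + 2"
  define C where "C (i::nat) = {z::'a. \<forall>w. dist z w > 1 \<longrightarrow> w \<notin> V i}" for i
  have convC: "convex (C i)" for i
  proof -
    have "C i = \<Inter> ((\<lambda>w. cball w 1) ` V i)"
      unfolding C_def by (auto simp: dist_commute not_less)
    then show ?thesis by (simp add: convex_INT)
  qed
  have main: "\<exists>z. \<forall>i<?k. z \<in> C i" if hyp: "\<forall>j<?k. \<exists>z. \<forall>i<?k. i \<noteq> j \<longrightarrow> z \<in> C i"
  proof (cases "inj_on C {..<?k}")
    case False
    then obtain a b where ab: "a < ?k" "b < ?k" "a \<noteq> b" "C a = C b"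
      unfolding inj_on_def by auto
    obtain z where z: "\<forall>i<?k. i \<noteq> a \<longrightarrow> z \<in> C i" using hyp ab by blast
    have "\<forall>i<?k. z \<in> C i"
      using z ab by metis
    then show ?thesis by blast
  next
    case True
    define F where "F = C ` {..<?k}"
    have cardF: "card F = ?k" unfolding F_def using True by (simp add: card_image)
    have "\<Inter>F \<noteq> {}"
    proof (rule Helly)
      show "DIM('a) + 1 \<le> card F" using cardF by simp
      show "\<forall>s\<in>F. convex s" unfolding F_def using convC by auto
    next
      fix t assume t: "t \<subseteq> F" "card t = DIM('a) + 1"
      have "t \<noteq> F" using t cardF by auto
      then obtain S where S: "S \<in> F" "S \<notin> t" using t by blast
      then obtain j where j: "j < ?k" "S = C j" unfolding F_def by auto
      obtain z where z: "\<forall>i<?k. i \<noteq> j \<longrightarrow> z \<in> C i" using hyp j by blast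
      have "z \<in> \<Inter>t"
      proof
        fix T assume "T \<in> t"
        then obtain i where "i < ?k" "T = C i" using t unfolding F_def by auto
        moreover have "i \<noteq> j" using S j \<open>T \<in> t\<close> calculation by auto
        ultimately show "z \<in> T" using z by auto
      qed
      then show "\<Inter>t \<noteq> {}" by blast
    qed
    then obtain z where "z \<in> \<Inter>F" by blast
    then show ?thesis unfolding F_def by auto
  qed
  show "sat (\<lambda>x y::'a. dist x y > 1) V x (H ?k)"
    unfolding sat_H two_step
    using main unfolding C_def by auto
qed

lemma sphere_arg:
  fixes z c :: "'a::real_normed_vector"
  assumes "0 \<le> \<rho>" "\<rho> \<le> 1" "\<forall>w. dist z w > 1 \<longrightarrow> w \<notin> sphere c \<rho>"
  shows "dist z c \<le> 1 - \<rho>"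
proof (rule ccontr)
  assume "\<not> ?thesis"
  then have dl: "dist z c > 1 - \<rho>" by simp
  define \<delta> where "\<delta> = dist z c"
  have dpos: "\<delta> > 0" using dl assms(2) unfolding \<delta>_def by linarith
  define w where "w = c + (\<rho> / \<delta>) *\<^sub>R (c - z)"
  have nz: "norm (c - z) = \<delta>" unfolding \<delta>_def by (simp add: dist_norm norm_minus_commute)
  have "dist c w = \<rho>"
    unfolding w_def dist_norm using dpos assms(1) nz by (simp add: abs_of_nonneg)
  then have "w \<in> sphere c \<rho>" by simp
  have "z - w = (1 + \<rho> / \<delta>) *\<^sub>R (z - c)"
    unfolding w_def by (simp add: algebra_simps)
  then have "dist z w = (1 + \<rho> / \<delta>) * \<delta>"
    using dpos assms(1) nz by (simp add: dist_norm norm_minus_commute abs_of_nonneg)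
  also have "\<dots> = \<delta> + \<rho>" using dpos by (simp add: field_simps)
  finally have "dist z w > 1" using dl unfolding \<delta>_def by linarith
  then show False using assms(3) \<open>w \<in> sphere c \<rho>\<close> by blast
qed

lemma norm_chi_sq:
  fixes A :: "'m::finite set"
  shows "(norm ((\<chi> k. if k \<in> A then g k else 0) :: real^'m))\<^sup>2 = (\<Sum>k\<in>A. (g k)\<^sup>2)"
proof -
  have "(norm ((\<chi> k. if k \<in> A then g k else 0) :: real^'m))\<^sup>2
     = (\<Sum>k\<in>UNIV. (if k \<in> A then (g k)\<^sup>2 else 0))"
    unfolding power2_norm_eq_inner inner_vec_def
    by (intro sum.cong) (auto simp: power2_eq_square)
  also have "\<dots> = (\<Sum>k\<in>UNIV \<inter> A. (g k)\<^sup>2)"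
    by (rule sum.inter_restrict[symmetric]) simp
  finally show ?thesis by simp
qed

lemma norm_diff_axis_sq:
  fixes z :: "real^'m"
  shows "(norm (z - axis b 1))\<^sup>2 = (norm z)\<^sup>2 - 2 * z$b + 1"
  by (simp add: power2_norm_eq_inner inner_diff_left inner_diff_right inner_axis inner_axis' inner_commute)

lemma sum_if_eq:
  assumes "finite A" "a \<in> A"
  shows "(\<Sum>k\<in>A. if k = a then p else q) = p + (real (card A) - 1) * (q::real)"
proof -
  have "(\<Sum>k\<in>A. if k = a then p else q) = p + (\<Sum>k\<in>A - {a}. if k = a then p else q)"
    using assms by (simp add: sum.remove)
  also have "(\<Sum>k\<in>A - {a}. if k = a then p else q) = (\<Sum>k\<in>A - {a}. q)"
    by (intro sum.cong) auto
  also have "\<dots> = (real (card A) - 1) * q"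
  proof -
    have "card A \<ge> 1" using assms by (metis One_nat_def Suc_leI card_gt_0_iff empty_iff)
    then show ?thesis using assms by (simp add: card_Diff_singleton of_nat_diff)
  qed
  finally show ?thesis .
qed

lemma param_facts:
  fixes D :: real
  assumes D: "D \<ge> 2"
  defines "s \<equiv> 1 / (2 * D)"
  shows "s > 0" "(D - 1) * (s + s\<^sup>2)\<^sup>2 < D * s\<^sup>2" "s\<^sup>2 + (D - 1) * (s\<^sup>2)\<^sup>2 \<le> 2 * s\<^sup>2"
proof -
  show sp: "s > 0" using D unfolding s_def by simp
  have "(D - 1) * (1 + s)\<^sup>2 < D"
  proof -
    have "1 + s = (2*D + 1) / (2*D)" using D unfolding s_def by (simp add: field_simps)
    then have "(D - 1) * (1 + s)\<^sup>2 = (D - 1) * (2*D+1)\<^sup>2 / (4 * D\<^sup>2)"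
      by (simp add: power_divide power_mult_distrib)
    also have "(D - 1) * (2*D+1)\<^sup>2 = 4 * D^3 - 3 * D - 1"
      by (simp add: power2_eq_square power3_eq_cube algebra_simps)
    also have "(4 * D^3 - 3 * D - 1) / (4 * D\<^sup>2) < D"
    proof -
      have p: "4 * D\<^sup>2 > 0" using D by simp
      have "D * (4 * D\<^sup>2) = 4 * D^3" by (simp add: power2_eq_square power3_eq_cube)
      then have "4 * D^3 - 3 * D - 1 < D * (4 * D\<^sup>2)" using D by linarith
      then show ?thesis using p by (simp add: divide_less_eq)
    qed
    finally show ?thesis .
  qed
  then have "(D - 1) * (1 + s)\<^sup>2 * s\<^sup>2 < D * s\<^sup>2"
    using sp by (intro mult_strict_right_mono) auto
  moreover have "(s + s\<^sup>2)\<^sup>2 = (1 + s)\<^sup>2 * s\<^sup>2" by (simp add: power2_eq_square algebra_simps)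
  ultimately show "(D - 1) * (s + s\<^sup>2)\<^sup>2 < D * s\<^sup>2" by (simp add: mult.assoc)
  have "(D - 1) * s\<^sup>2 \<le> 1"
  proof -
    have "(D - 1) * s\<^sup>2 = (D - 1) / (4 * D\<^sup>2)" unfolding s_def by (simp add: power2_eq_square)
    also have "\<dots> \<le> 1"
    proof -
      have "2 * D \<le> D * D" using D by (intro mult_right_mono) auto
      then have "D - 1 \<le> 4 * D\<^sup>2" using D unfolding power2_eq_square by linarith
      moreover have "4 * D\<^sup>2 > 0" using D by simp
      ultimately show ?thesis by (simp add: pos_divide_le_eq)
    qed
    finally show ?thesis .
  qed
  then have "(D - 1) * s\<^sup>2 * s\<^sup>2 \<le> 1 * s\<^sup>2" by (intro mult_right_mono) auto
  then show "s\<^sup>2 + (D - 1) * (s\<^sup>2)\<^sup>2 \<le> 2 * s\<^sup>2" by (simp add: power2_eq_square algebra_simps)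
qed

lemma counter:
  fixes d :: nat
  assumes d2: "2 \<le> d" and dm: "d \<le> CARD('m::finite)"
  shows "\<not> valid_frame (\<lambda>x y::real^'m. dist x y > 1) (H (d + 1))"
proof -
  obtain A :: "'m set" where A: "card A = d" "finite A"
    using obtain_subset_with_card_n[of d "UNIV :: 'm set"] dm by auto
  obtain f where f: "bij_betw f {0..<d} A"
    using ex_bij_betw_nat_finite[OF A(2)] A(1) by auto
  define D where "D = real d"
  have D2: "D \<ge> 2" using d2 unfolding D_def by simp
  define s where "s = 1 / (2 * D)"
  note pf = param_facts[OF D2, folded s_def]
  define R0 where "R0 = (s + s\<^sup>2) * sqrt (D - 1)"
  have R0sq: "R0\<^sup>2 = (D - 1) * (s + s\<^sup>2)\<^sup>2"
    unfolding R0_def using D2 by (simp add: power_mult_distrib)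
  have R0nn: "R0 \<ge> 0" unfolding R0_def using pf(1) D2 by simp
  have R0lt: "R0\<^sup>2 < D * s\<^sup>2" using R0sq pf(2) by simp
  have Ds2: "D * s\<^sup>2 \<le> 1"
  proof -
    have "D * s\<^sup>2 = 1 / (4 * D)" unfolding s_def using D2 by (simp add: power2_eq_square field_simps)
    also have "\<dots> \<le> 1" using D2 by simp
    finally show ?thesis .
  qed
  have R0le: "R0 \<le> 1"
  proof (rule ccontr)
    assume "\<not> R0 \<le> 1"
    then have "1 * 1 \<le> R0 * R0" by (intro mult_mono) auto
    then show False using R0lt Ds2 by (simp add: power2_eq_square)
  qed
  define \<rho> where "\<rho> = 1 - R0"
  have rho: "0 \<le> \<rho>" "\<rho> \<le> 1" using R0le R0nn unfolding \<rho>_def by auto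
  define c0 :: "real^'m" where "c0 = (\<chi> k. if k \<in> A then - s else 0)"
  define V where "V p = (if p = 0 then sphere c0 \<rho> else if p - 1 < d then {axis (f (p - 1)) (1::real)} else {})" for p
  let ?R = "\<lambda>x y::real^'m. dist x y > 1"
  have c0sq: "(norm z)\<^sup>2 + 2 * s * (\<Sum>k\<in>A. z$k) + D * s\<^sup>2 = (norm (z - c0))\<^sup>2" for z :: "real^'m"
  proof -
    have "z \<bullet> c0 = (\<Sum>k\<in>UNIV. if k \<in> A then - s * z$k else 0)"
      unfolding c0_def inner_vec_def by (intro sum.cong) auto
    also have "\<dots> = (\<Sum>k\<in>UNIV \<inter> A. - s * z$k)"
      by (rule sum.inter_restrict[symmetric]) simp
    also have "\<dots> = - s * (\<Sum>k\<in>A. z$k)" by (simp add: sum_distrib_left)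
    finally have i1: "z \<bullet> c0 = - s * (\<Sum>k\<in>A. z$k)" .
    have "(norm c0)\<^sup>2 = (\<Sum>k\<in>A. (- s)\<^sup>2)" unfolding c0_def by (rule norm_chi_sq)
    then have i2: "c0 \<bullet> c0 = D * s\<^sup>2" using A unfolding D_def by (simp add: power2_norm_eq_inner)
    show ?thesis
      using i1 i2 inner_commute[of z c0]
      by (simp add: power2_norm_eq_inner inner_diff_left inner_diff_right)
  qed
  have fA: "f i \<in> A" if "i < d" for i using f that unfolding bij_betw_def by auto
  have fsurj: "\<exists>i<d. f i = b" if "b \<in> A" for b
    using f that unfolding bij_betw_def by (metis atLeastLessThan_iff imageE)
  have finj: "f i \<noteq> f j" if "i < d" "j < d" "i \<noteq> j" for i j
    using f that unfolding bij_betw_def inj_on_def by auto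
  have ante: "\<exists>z. \<forall>i<d+1. i \<noteq> j \<longrightarrow> (\<forall>w. ?R z w \<longrightarrow> w \<notin> V i)" if j: "j < d + 1" for j
  proof (cases j)
    case 0
    show ?thesis
    proof (intro exI[of _ "0::real^'m"] allI impI)
      fix i w assume i: "i < d + 1" "i \<noteq> j" and "?R 0 w"
      then show "w \<notin> V i" using 0 unfolding V_def by auto
    qed
  next
    case (Suc j')
    have j': "j' < d" using j Suc by simp
    define a where "a = f j'"
    have aA: "a \<in> A" using fA j' unfolding a_def by simp
    define z :: "real^'m" where "z = (\<chi> k. if k \<in> A then (if k = a then - s else s\<^sup>2) else 0)"
    have nz: "(norm z)\<^sup>2 = s\<^sup>2 + (D - 1) * (s\<^sup>2)\<^sup>2"
    proof -
      have "(norm z)\<^sup>2 = (\<Sum>k\<in>A. (if k = a then - s else s\<^sup>2)\<^sup>2)" unfolding z_def by (rule norm_chi_sq)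
      also have "\<dots> = (\<Sum>k\<in>A. if k = a then s\<^sup>2 else (s\<^sup>2)\<^sup>2)" by (intro sum.cong) auto
      also have "\<dots> = s\<^sup>2 + (D - 1) * (s\<^sup>2)\<^sup>2" using sum_if_eq[OF A(2) aA] A unfolding D_def by simp
      finally show ?thesis .
    qed
    have zc: "norm (z - c0) = R0"
    proof -
      have "z - c0 = (\<chi> k. if k \<in> A then (if k = a then 0 else s + s\<^sup>2) else 0)"
        unfolding z_def c0_def by (simp add: vec_eq_iff)
      then have "(norm (z - c0))\<^sup>2 = (\<Sum>k\<in>A. (if k = a then 0 else s + s\<^sup>2)\<^sup>2)" by (simp add: norm_chi_sq)
      also have "\<dots> = (\<Sum>k\<in>A. if k = a then 0 else (s + s\<^sup>2)\<^sup>2)" by (intro sum.cong) auto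
      also have "\<dots> = R0\<^sup>2" using sum_if_eq[OF A(2) aA] A R0sq unfolding D_def by simp
      finally show ?thesis using R0nn by (metis norm_ge_zero power2_eq_iff_nonneg)
    qed
    show ?thesis
    proof (intro exI[of _ z] allI impI)
      fix i w assume i: "i < d + 1" "i \<noteq> j" and Rzw: "?R z w"
      show "w \<notin> V i"
      proof (cases i)
        case 0
        show ?thesis
        proof
          assume "w \<in> V i"
          then have "dist c0 w = \<rho>" using 0 unfolding V_def by simp
          moreover have "dist z w \<le> dist z c0 + dist c0 w" by (rule dist_triangle)
          moreover have "dist z c0 = R0" using zc by (simp add: dist_norm)
          ultimately show False using Rzw unfolding \<rho>_def by simp
        qed
      next
        case (Suc i')
        have i': "i' < d" "i' \<noteq> j'" using i Suc \<open>j = Suc j'\<close> by auto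
        define b where "b = f i'"
        have bA: "b \<in> A" "b \<noteq> a" using fA finj i' j' unfolding a_def b_def by auto
        have "z $ b = s\<^sup>2" unfolding z_def using bA by simp
        then have "(norm (z - axis b 1))\<^sup>2 \<le> 1"
          using norm_diff_axis_sq[of z b] nz pf(3) by simp
        then have "norm (z - axis b 1) \<le> 1" by (simp add: power_le_one_iff)
        then have "w \<noteq> axis b 1" using Rzw by (auto simp: dist_norm)
        then show ?thesis using Suc i' unfolding V_def b_def by simp
      qed
    qed
  qed
  have cons: "\<not> (\<exists>z. \<forall>i<d+1. \<forall>w. ?R z w \<longrightarrow> w \<notin> V i)"
  proof
    assume "\<exists>z. \<forall>i<d+1. \<forall>w. ?R z w \<longrightarrow> w \<notin> V i"
    then obtain z where z: "\<forall>i<d+1. \<forall>w. ?R z w \<longrightarrow> w \<notin> V i" by blast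
    have "\<forall>w. ?R z w \<longrightarrow> w \<notin> sphere c0 \<rho>" using z[rule_format, of 0] unfolding V_def by auto
    then have "dist z c0 \<le> R0" using sphere_arg[OF rho] unfolding \<rho>_def by fastforce
    then have "(norm (z - c0))\<^sup>2 \<le> R0\<^sup>2"
      by (simp add: dist_norm power_mono)
    then have e1: "(norm z)\<^sup>2 + 2 * s * (\<Sum>k\<in>A. z$k) + D * s\<^sup>2 \<le> R0\<^sup>2" using c0sq[of z] by simp
    have zb: "(norm z)\<^sup>2 \<le> 2 * z$b" if bA: "b \<in> A" for b
    proof -
      obtain i where i: "i < d" "f i = b" using fsurj bA by blast
      have "\<forall>w. ?R z w \<longrightarrow> w \<notin> V (Suc i)" using z i by simp
      then have "\<not> ?R z (axis b 1)" using i unfolding V_def by auto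
      then have "norm (z - axis b 1) \<le> 1" by (simp add: dist_norm)
      then have "(norm (z - axis b 1))\<^sup>2 \<le> 1" by (simp add: power_le_one)
      then show ?thesis using norm_diff_axis_sq[of z b] by simp
    qed
    have "(\<Sum>k\<in>A. (norm z)\<^sup>2) \<le> (\<Sum>k\<in>A. 2 * z$k)" by (rule sum_mono) (use zb in auto)
    then have "D * (norm z)\<^sup>2 \<le> 2 * (\<Sum>k\<in>A. z$k)" using A unfolding D_def by (simp add: sum_distrib_left)
    then have "s * (D * (norm z)\<^sup>2) \<le> s * (2 * (\<Sum>k\<in>A. z$k))" using pf(1) by (intro mult_left_mono) auto
    moreover have "0 \<le> s * (D * (norm z)\<^sup>2)" using pf(1) D2 by simp
    moreover have "s * (2 * (\<Sum>k\<in>A. z$k)) = 2 * s * (\<Sum>k\<in>A. z$k)" by simp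
    moreover have "0 \<le> (norm z)\<^sup>2" by simp
    ultimately show False using e1 R0lt by linarith
  qed
  have "\<not> sat ?R V 0 (H (d + 1))"
    unfolding sat_H two_step using ante cons by blast
  then show ?thesis unfolding valid_frame_def by blast
qed

theorem theorem3p3:
  assumes "CARD('n::finite) < CARD('m::finite)"
  shows "\<not> (Log_gt1 TYPE(real ^ 'n) \<subseteq> Log_gt1 TYPE(real ^ 'm))
         \<and> Log_gt1 TYPE(real ^ 'n) \<noteq> Log_gt1 TYPE(real ^ 'm)"
proof -
  have v: "H (CARD('n) + 2) \<in> Log_gt1 TYPE(real ^ 'n)"
    using helly_valid[where 'a="real^'n"] unfolding Log_gt1_def by simp
  have c1: "CARD('n) \<ge> 1" by (simp add: Suc_leI)
  have "\<not> valid_frame (\<lambda>x y::real^'m. dist x y > 1) (H (CARD('n) + 1 + 1))"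
    by (rule counter) (use assms c1 in auto)
  then have nv: "H (CARD('n) + 2) \<notin> Log_gt1 TYPE(real ^ 'm)"
    unfolding Log_gt1_def by (simp add: add.assoc)
  show ?thesis using v nv by blast
qed

end
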